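(* For each $i\in\{1,\dots,n\}$ let $D_i\in\mathbb{R}^{d\times m}$, let $\Gamma_i\in\mathbb{R}^{m\times m}$ be diagonal with entries in $\{0,1\}$, and let a linear basis warp $(\beta_i,Z_i,\mu_i)$ with $\mu_i\ge0$ be given, with $\mathcal{B}_i=\mathcal{B}_i(D_i)$ and $M_i=\mathcal{B}_i\Gamma_i\Gamma_i\mathcal{B}_i^{\top}+\mu_iZ_i^{\top}Z_i$ invertible. Let $P_i=\Gamma_i-\Gamma_i\mathcal{B}_i^{\top}M_i^{-1}\mathcal{B}_i\Gamma_i$ and $\mathcal{P}_{III}=\sum_iP_i$. If every warp contains free-translations, then $\mathcal{P}_{III}\mathbf{1}=0$, $P_i\mathbf{1}=0$ for all $i$, and for every $i$ there exists $x_i$ with $\Gamma_i\mathcal{B}_i^{\top}x_i=\Gamma_i\mathbf{1}$ and, if $\mu_i>0$, $Z_ix_i=0$. In particular these conclusions hold whenever each warp is the affine transformation ($\beta(p)=[p^{\top},1]^{\top}$, $\mu_i=0$) or a TPS warp.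
   Context: A linear basis warp (LBW) $(\beta,Z,\mu)$ with feature map $\beta:\mathbb{R}^d\to\mathbb{R}^l$ is the map $p\mapsto W^{\top}\beta(p)$, $W\in\mathbb{R}^{l\times d}$, regularized by $\mu\|ZW\|_F^2$; for $D=[p_1,\dots,p_m]$, $\mathcal{B}(D)=[\beta(p_1),\dots,\beta(p_m)]$. It contains free-translations if there is $x\in\mathbb{R}^l$ with $\beta(p)^{\top}x=1$ for all $p\in\mathbb{R}^d$ and, if $\mu>0$, $Zx=0$. TPS warp ($d\in\{2,3\}$): control centers $c_1,\dots,c_l\in\mathbb{R}^d$, parameter $\lambda$, kernel $\phi(r)=r^2\log(r^2)$ ($d=2$) or $\phi(r)=-|r|$ ($d=3$); $K_\lambda\in\mathbb{R}^{l\times l}$ with diagonal $\lambda$ and $(K_\lambda)_{jk}=\phi(\|c_j-c_k\|)$ off the diagonal; $\tilde{C}=[\tilde{c}_1,\dots,\tilde{c}_l]$, $\tilde{c}_j=[c_j^{\top},1]^{\top}$; $K_\lambda$ and $\tilde{C}K_\lambda^{-1}\tilde{C}^{\top}$ assumed invertible; $\bar{\mathcal{E}}_\lambda=K_\lambda^{-1}-K_\lambda^{-1}\tilde{C}^{\top}(\tilde{C}K_\lambda^{-1}\tilde{C}^{\top})^{-1}\tilde{C}K_\lambda^{-1}$ (bending energy matrix, positive semidefinite in the paper's setting); $\mathcal{E}_\lambda=\begin{bmatrix}\bar{\mathcal{E}}_\lambda\\ (\tilde{C}K_\lambda^{-1}\tilde{C}^{\top})^{-1}\tilde{C}K_\lambda^{-1}\end{bmatrix}$;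 $\beta(p)=\mathcal{E}_\lambda^{\top}\begin{bmatrix}\phi_p\\ \tilde{p}\end{bmatrix}$ with $\phi_p=[\phi(\|p-c_j\|)]_{j=1}^l$, $\tilde{p}=[p^{\top},1]^{\top}$; $Z=\sqrt{\bar{\mathcal{E}}_\lambda}$ (symmetric PSD square root), $\mu\ge0$. $\mathbf{1}\in\mathbb{R}^m$ is the all-ones vector. *)

theory Defs
  imports Complex_Main "Jordan_Normal_Form.Matrix"
begin

definition minv :: "real mat \<Rightarrow> real mat" where
  "minv A = (THE B. B \<in> carrier_mat (dim_row A) (dim_row A) \<and> A * B = 1\<^sub>m (dim_row A) \<and> B * A = 1\<^sub>m (dim_row A))"

fun msum :: "nat \<Rightarrow> nat \<Rightarrow> (nat \<Rightarrow> real mat) \<Rightarrow> nat \<Rightarrow> real mat" where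
  "msum nr nc f 0 = 0\<^sub>m nr nc"
| "msum nr nc f (Suc n) = msum nr nc f n + f n"

definition ones_vec :: "nat \<Rightarrow> real vec" where
  "ones_vec m = vec m (\<lambda>_. 1)"

definition basis_mat :: "nat \<Rightarrow> (real vec \<Rightarrow> real vec) \<Rightarrow> real mat \<Rightarrow> real mat" where
  "basis_mat l \<beta> D = mat l (dim_col D) (\<lambda>(j,k). \<beta> (col D k) $ j)"

definition lbw :: "nat \<Rightarrow> nat \<Rightarrow> (real vec \<Rightarrow> real vec) \<Rightarrow> real mat \<Rightarrow> real \<Rightarrow> bool" where
  "lbw d l \<beta> Z \<mu> \<longleftrightarrow> (\<forall>p\<in>carrier_vec d. \<beta> p \<in> carrier_vec l) \<and> dim_col Z = l"

definition contains_free_translations ::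
  "nat \<Rightarrow> nat \<Rightarrow> (real vec \<Rightarrow> real vec) \<Rightarrow> real mat \<Rightarrow> real \<Rightarrow> bool" where
  "contains_free_translations d l \<beta> Z \<mu> \<longleftrightarrow>
     (\<exists>x\<in>carrier_vec l. (\<forall>p\<in>carrier_vec d. \<beta> p \<bullet> x = 1) \<and>
        (\<mu> > 0 \<longrightarrow> Z *\<^sub>v x = 0\<^sub>v (dim_row Z)))"

definition affine_warp :: "nat \<Rightarrow> nat \<Rightarrow> (real vec \<Rightarrow> real vec) \<Rightarrow> real mat \<Rightarrow> real \<Rightarrow> bool" where
  "affine_warp d l \<beta> Z \<mu> \<longleftrightarrow> l = d + 1 \<and> \<mu> = 0 \<and>
     (\<forall>p\<in>carrier_vec d. \<beta> p = p @\<^sub>v ones_vec 1)"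

definition vnorm :: "real vec \<Rightarrow> real" where
  "vnorm v = sqrt (v \<bullet> v)"

definition tps_phi :: "nat \<Rightarrow> real \<Rightarrow> real" where
  "tps_phi d r = (if d = 2 then r\<^sup>2 * ln (r\<^sup>2) else - \<bar>r\<bar>)"

definition tps_K :: "nat \<Rightarrow> nat \<Rightarrow> (nat \<Rightarrow> real vec) \<Rightarrow> real \<Rightarrow> real mat" where
  "tps_K d l c lam = mat l l (\<lambda>(j,k). if j = k then lam else tps_phi d (vnorm (c j - c k)))"

definition tps_Ctil :: "nat \<Rightarrow> nat \<Rightarrow> (nat \<Rightarrow> real vec) \<Rightarrow> real mat" where
  "tps_Ctil d l c = mat (d + 1) l (\<lambda>(i,j). if i < d then c j $ i else 1)"

definition tps_Ebar :: "nat \<Rightarrow> nat \<Rightarrow> (nat \<Rightarrow> real vec) \<Rightarrow> real \<Rightarrow> real mat" where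
  "tps_Ebar d l c lam =
     (let Ki = minv (tps_K d l c lam); C = tps_Ctil d l c
      in Ki - Ki * C\<^sup>T * minv (C * Ki * C\<^sup>T) * C * Ki)"

definition tps_E :: "nat \<Rightarrow> nat \<Rightarrow> (nat \<Rightarrow> real vec) \<Rightarrow> real \<Rightarrow> real mat" where
  "tps_E d l c lam =
     (let Ki = minv (tps_K d l c lam); C = tps_Ctil d l c
      in tps_Ebar d l c lam @\<^sub>r (minv (C * Ki * C\<^sup>T) * C * Ki))"

definition tps_beta :: "nat \<Rightarrow> nat \<Rightarrow> (nat \<Rightarrow> real vec) \<Rightarrow> real \<Rightarrow> real vec \<Rightarrow> real vec" where
  "tps_beta d l c lam p =
     (tps_E d l c lam)\<^sup>T *\<^sub>v (vec l (\<lambda>j. tps_phi d (vnorm (p - c j))) @\<^sub>v (p @\<^sub>v ones_vec 1))"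

definition psd :: "real mat \<Rightarrow> bool" where
  "psd A \<longleftrightarrow> A \<in> carrier_mat (dim_row A) (dim_row A) \<and> A\<^sup>T = A \<and>
     (\<forall>x\<in>carrier_vec (dim_row A). x \<bullet> (A *\<^sub>v x) \<ge> 0)"

definition is_psd_sqrt :: "real mat \<Rightarrow> real mat \<Rightarrow> bool" where
  "is_psd_sqrt Z A \<longleftrightarrow> psd Z \<and> dim_row Z = dim_row A \<and> Z * Z = A"

definition tps_warp :: "nat \<Rightarrow> nat \<Rightarrow> (real vec \<Rightarrow> real vec) \<Rightarrow> real mat \<Rightarrow> real \<Rightarrow> bool" where
  "tps_warp d l \<beta> Z \<mu> \<longleftrightarrow> (\<exists>c lam.
     (d = 2 \<or> d = 3) \<and> (\<forall>j<l. c j \<in> carrier_vec d) \<and>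
     invertible_mat (tps_K d l c lam) \<and>
     invertible_mat (tps_Ctil d l c * minv (tps_K d l c lam) * (tps_Ctil d l c)\<^sup>T) \<and>
     is_psd_sqrt Z (tps_Ebar d l c lam) \<and> \<mu> \<ge> 0 \<and>
     (\<forall>p\<in>carrier_vec d. \<beta> p = tps_beta d l c lam p))"

definition lbw_M :: "nat \<Rightarrow> (real vec \<Rightarrow> real vec) \<Rightarrow> real mat \<Rightarrow> real \<Rightarrow> real mat \<Rightarrow> real mat \<Rightarrow> real mat" where
  "lbw_M l \<beta> Z \<mu> D \<Gamma> = basis_mat l \<beta> D * \<Gamma> * \<Gamma> * (basis_mat l \<beta> D)\<^sup>T + \<mu> \<cdot>\<^sub>m (Z\<^sup>T * Z)"

definition lbw_P :: "nat \<Rightarrow> (real vec \<Rightarrow> real vec) \<Rightarrow> real mat \<Rightarrow> real \<Rightarrow> real mat \<Rightarrow> real mat \<Rightarrow> real mat" where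
  "lbw_P l \<beta> Z \<mu> D \<Gamma> = \<Gamma> - \<Gamma> * (basis_mat l \<beta> D)\<^sup>T * minv (lbw_M l \<beta> Z \<mu> D \<Gamma>) * basis_mat l \<beta> D * \<Gamma>"

end

theory Submission imports Defs begin

lemma smult_mat_vec_assoc:
  assumes A: "A \<in> carrier_mat nr nc" and v: "v \<in> carrier_vec nc"
  shows "(k \<cdot>\<^sub>m A) *\<^sub>v v = k \<cdot>\<^sub>v (A *\<^sub>v v)"
proof (rule eq_vecI)
  fix i assume "i < dim_vec (k \<cdot>\<^sub>v (A *\<^sub>v v))"
  hence i: "i < nr" using A by auto
  have r: "row A i \<in> carrier_vec nc" using A by auto
  show "((k \<cdot>\<^sub>m A) *\<^sub>v v) $ i = (k \<cdot>\<^sub>v (A *\<^sub>v v)) $ i"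
    using i A smult_scalar_prod_distrib[OF r v, of k] by simp
qed (use A in auto)

lemma self_dot_zero:
  fixes v :: "real vec"
  assumes "v \<bullet> v = 0" shows "v = 0\<^sub>v (dim_vec v)"
proof -
  have "(\<Sum>i\<in>{0..<dim_vec v}. v $ i * v $ i) = 0" using assms by (simp add: scalar_prod_def)
  hence "\<forall>i\<in>{0..<dim_vec v}. v $ i * v $ i = 0"
    by (subst sum_nonneg_eq_0_iff[symmetric]) auto
  thus ?thesis by (intro eq_vecI) auto
qed

lemma minv_props:
  assumes A: "A \<in> carrier_mat k k" and inv: "invertible_mat A"
  shows "minv A \<in> carrier_mat k k \<and> A * minv A = 1\<^sub>m k \<and> minv A * A = 1\<^sub>m k"
proof -
  obtain B where B1: "A * B = 1\<^sub>m (dim_row A)" and B2: "B * A = 1\<^sub>m (dim_row B)"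
    using inv unfolding invertible_mat_def inverts_mat_def by blast
  have dA: "dim_row A = k" "dim_col A = k" using A by auto
  have "dim_col (A * B) = k" using B1 dA by simp
  hence dcB: "dim_col B = k" by simp
  have "dim_row (B * A) = dim_row B" by simp
  have "dim_col (B * A) = k" using dA by simp
  have drB: "dim_row B = k" using arg_cong[OF B2, of dim_col] dA by simp
  have Bc: "B \<in> carrier_mat k k" using dcB drB unfolding carrier_mat_def by blast
  have B1': "A * B = 1\<^sub>m k" using B1 unfolding dA(1) .
  have B2': "B * A = 1\<^sub>m k" using B2 unfolding drB .
  have uniq: "C = B" if C: "C \<in> carrier_mat k k" "C * A = 1\<^sub>m k" for C
  proof -
    have "C * (A * B) = C" unfolding B1' using C by simp
    moreover have "C * (A * B) = (C * A) * B" using assoc_mult_mat[OF C(1) A Bc] by simp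
    moreover have "(C * A) * B = B" unfolding C(2) using Bc by simp
    ultimately show ?thesis by simp
  qed
  have "minv A = B" unfolding minv_def dA(1)
  proof (rule the_equality)
    show "B \<in> carrier_mat k k \<and> A * B = 1\<^sub>m k \<and> B * A = 1\<^sub>m k" using Bc B1' B2' by blast
  next
    fix C assume "C \<in> carrier_mat k k \<and> A * C = 1\<^sub>m k \<and> C * A = 1\<^sub>m k"
    thus "C = B" using uniq by blast
  qed
  thus ?thesis using Bc B1' B2' by simp
qed

lemma gam_idem:
  fixes G :: "real mat"
  assumes G: "G \<in> carrier_mat m m" "diagonal_mat G" "\<forall>k<m. G $$ (k,k) \<in> {0,1}"
  shows "G * G = G"
proof (rule eq_matI)
  fix i j assume ij: "i < dim_row G" "j < dim_col G"
  hence ij': "i < m" "j < m" using G by auto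
  have off: "G $$ (a,b) = 0" if "a < m" "b < m" "a \<noteq> b" for a b
    using G that unfolding diagonal_mat_def by auto
  have "(G * G) $$ (i,j) = (\<Sum>k\<in>{0..<m}. G $$ (i,k) * G $$ (k,j))"
    using G ij' by (simp add: scalar_prod_def)
  also have "\<dots> = G $$ (i,i) * G $$ (i,j) + (\<Sum>k\<in>{0..<m}-{i}. G $$ (i,k) * G $$ (k,j))"
    using ij' by (subst sum.remove[of _ i]) auto
  also have "(\<Sum>k\<in>{0..<m}-{i}. G $$ (i,k) * G $$ (k,j)) = 0"
    using off ij' by (intro sum.neutral) auto
  also have "G $$ (i,i) * G $$ (i,j) = G $$ (i,j)"
  proof (cases "i = j")
    case True
    have "G $$ (i,i) = 0 \<or> G $$ (i,i) = 1" using G(3) ij' by auto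
    thus ?thesis using True by auto
  qed (use off ij' in auto)
  finally show "(G * G) $$ (i,j) = G $$ (i,j)" by simp
qed (use G in auto)


lemma core:
  fixes G Dm Z :: "real mat" and x :: "real vec"
  assumes Dm: "Dm \<in> carrier_mat d m" and G: "G \<in> carrier_mat m m" and GG: "G * G = G"
    and lb: "lbw d l \<beta> Z \<mu>" and mu: "\<mu> \<ge> 0"
    and inv: "invertible_mat (lbw_M l \<beta> Z \<mu> Dm G)"
    and x: "x \<in> carrier_vec l" and bx: "\<forall>p\<in>carrier_vec d. \<beta> p \<bullet> x = 1"
    and zx: "\<mu> > 0 \<longrightarrow> Z *\<^sub>v x = 0\<^sub>v (dim_row Z)"
  shows "G * (basis_mat l \<beta> Dm)\<^sup>T *\<^sub>v x = G *\<^sub>v ones_vec m"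
    and "lbw_P l \<beta> Z \<mu> Dm G *\<^sub>v ones_vec m = 0\<^sub>v m"
    and "lbw_P l \<beta> Z \<mu> Dm G \<in> carrier_mat m m"
proof -
  define B where "B = basis_mat l \<beta> Dm"
  have Bc: "B \<in> carrier_mat l m" using Dm unfolding B_def basis_mat_def by auto
  have BTc: "B\<^sup>T \<in> carrier_mat m l" using Bc by auto
  define r where "r = dim_row Z"
  have Zc: "Z \<in> carrier_mat r l" using lb unfolding lbw_def r_def carrier_mat_def by blast
  have one: "ones_vec m \<in> carrier_vec m" by (simp add: ones_vec_def)
  have Btx: "B\<^sup>T *\<^sub>v x = ones_vec m"
  proof (rule eq_vecI)
    fix k assume "k < dim_vec (ones_vec m)"
    hence k: "k < m" by (simp add: ones_vec_def)
    have cD: "col Dm k \<in> carrier_vec d" using Dm k by auto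
    have bc: "\<beta> (col Dm k) \<in> carrier_vec l" using lb cD unfolding lbw_def by auto
    have cB: "col B k = \<beta> (col Dm k)" using k Dm bc unfolding B_def basis_mat_def
      by (intro eq_vecI) auto
    have "(B\<^sup>T *\<^sub>v x) $ k = col B k \<bullet> x" using k Bc by simp
    thus "(B\<^sup>T *\<^sub>v x) $ k = ones_vec m $ k" using bx cD k cB by (simp add: ones_vec_def)
  qed (use Bc in \<open>simp add: ones_vec_def\<close>)
  define M where "M = lbw_M l \<beta> Z \<mu> Dm G"
  have Mdef: "M = B * G * G * B\<^sup>T + \<mu> \<cdot>\<^sub>m (Z\<^sup>T * Z)" unfolding M_def lbw_M_def B_def ..
  have ZZc: "Z\<^sup>T * Z \<in> carrier_mat l l" using Zc by auto
  have Mc: "M \<in> carrier_mat l l" using Bc G ZZc unfolding Mdef by auto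
  obtain Mi where Mi: "Mi \<in> carrier_mat l l" "Mi * M = 1\<^sub>m l" "minv M = Mi"
  proof -
    have iM: "invertible_mat M" using inv unfolding M_def .
    show ?thesis using minv_props[OF Mc iM] that by blast
  qed
  have mux: "(\<mu> \<cdot>\<^sub>m (Z\<^sup>T * Z)) *\<^sub>v x = 0\<^sub>v l"
  proof (cases "\<mu> > 0")
    case True
    then have z0: "Z *\<^sub>v x = 0\<^sub>v r" using zx unfolding r_def by blast
    have "(Z\<^sup>T * Z) *\<^sub>v x = Z\<^sup>T *\<^sub>v (Z *\<^sub>v x)"
      using assoc_mult_mat_vec[of "Z\<^sup>T" l r Z l x] Zc x by auto
    also have "\<dots> = 0\<^sub>v l" unfolding z0 using Zc by auto
    finally have zz: "(Z\<^sup>T * Z) *\<^sub>v x = 0\<^sub>v l" .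
    have s0: "\<mu> \<cdot>\<^sub>v 0\<^sub>v l = 0\<^sub>v l" by (intro eq_vecI) auto
    show ?thesis unfolding smult_mat_vec_assoc[OF ZZc x, of \<mu>] zz s0 ..
  next
    case False
    hence "\<mu> = 0" using mu by auto
    then show ?thesis using smult_mat_vec_assoc[OF ZZc x, of \<mu>] ZZc x
      by (intro eq_vecI) auto
  qed
  have BGc: "B * G \<in> carrier_mat l m" using mult_carrier_mat[OF Bc G] .
  have BG: "B * G * G = B * G" using assoc_mult_mat[OF Bc G G] GG by simp
  have Gx: "G * B\<^sup>T *\<^sub>v x = G *\<^sub>v ones_vec m"
    unfolding Btx[symmetric] by (rule assoc_mult_mat_vec[OF G BTc x])
  have BGBc: "B * G * B\<^sup>T \<in> carrier_mat l l" using mult_carrier_mat[OF BGc BTc] .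
  have BGGBc: "B * G * G * B\<^sup>T \<in> carrier_mat l l" unfolding BG by (rule BGBc)
  have muc: "\<mu> \<cdot>\<^sub>m (Z\<^sup>T * Z) \<in> carrier_mat l l" using smult_carrier_mat[OF ZZc] .
  have Mx: "M *\<^sub>v x = B *\<^sub>v (G *\<^sub>v ones_vec m)"
  proof -
    have "M *\<^sub>v x = (B * G * G * B\<^sup>T) *\<^sub>v x + (\<mu> \<cdot>\<^sub>m (Z\<^sup>T * Z)) *\<^sub>v x"
      unfolding Mdef by (rule add_mult_distrib_mat_vec[OF BGGBc muc x])
    also have "\<dots> = (B * G * B\<^sup>T) *\<^sub>v x + 0\<^sub>v l" unfolding mux BG ..
    also have "\<dots> = (B * G * B\<^sup>T) *\<^sub>v x"
      by (rule right_zero_vec, rule mult_mat_vec_carrier[OF BGBc x])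
    also have "\<dots> = (B * G) *\<^sub>v (B\<^sup>T *\<^sub>v x)"
      by (rule assoc_mult_mat_vec[OF BGc BTc x])
    also have "\<dots> = B *\<^sub>v (G *\<^sub>v ones_vec m)" unfolding Btx
      by (rule assoc_mult_mat_vec[OF Bc G one])
    finally show ?thesis .
  qed
  have MiBG: "Mi *\<^sub>v (B *\<^sub>v (G *\<^sub>v ones_vec m)) = x"
  proof -
    have "Mi *\<^sub>v (M *\<^sub>v x) = (Mi * M) *\<^sub>v x" by (rule assoc_mult_mat_vec[OF Mi(1) Mc x, symmetric])
    also have "\<dots> = x" unfolding Mi(2) by (rule one_mult_mat_vec[OF x])
    finally show ?thesis unfolding Mx .
  qed
  have Pdef: "lbw_P l \<beta> Z \<mu> Dm G = G - G * B\<^sup>T * Mi * B * G"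
    unfolding lbw_P_def B_def[symmetric] M_def[symmetric] Mi(3) ..
  have c1: "G * B\<^sup>T \<in> carrier_mat m l" using mult_carrier_mat[OF G BTc] .
  have c2: "G * B\<^sup>T * Mi \<in> carrier_mat m l" using mult_carrier_mat[OF c1 Mi(1)] .
  have c3: "G * B\<^sup>T * Mi * B \<in> carrier_mat m m" using mult_carrier_mat[OF c2 Bc] .
  have Qc: "G * B\<^sup>T * Mi * B * G \<in> carrier_mat m m" using mult_carrier_mat[OF c3 G] .
  have Gone: "G *\<^sub>v ones_vec m \<in> carrier_vec m" using mult_mat_vec_carrier[OF G one] .
  have BGone: "B *\<^sub>v (G *\<^sub>v ones_vec m) \<in> carrier_vec l" using mult_mat_vec_carrier[OF Bc Gone] .
  show "lbw_P l \<beta> Z \<mu> Dm G \<in> carrier_mat m m" unfolding Pdef by (rule minus_carrier_mat[OF Qc])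
  have Q1: "(G * B\<^sup>T * Mi * B * G) *\<^sub>v ones_vec m = G *\<^sub>v ones_vec m"
  proof -
    have "(G * B\<^sup>T * Mi * B * G) *\<^sub>v ones_vec m = (G * B\<^sup>T * Mi * B) *\<^sub>v (G *\<^sub>v ones_vec m)"
      by (rule assoc_mult_mat_vec[OF c3 G one])
    also have "\<dots> = (G * B\<^sup>T * Mi) *\<^sub>v (B *\<^sub>v (G *\<^sub>v ones_vec m))"
      by (rule assoc_mult_mat_vec[OF c2 Bc Gone])
    also have "\<dots> = (G * B\<^sup>T) *\<^sub>v (Mi *\<^sub>v (B *\<^sub>v (G *\<^sub>v ones_vec m)))"
      by (rule assoc_mult_mat_vec[OF c1 Mi(1) BGone])
    also have "\<dots> = G *\<^sub>v ones_vec m" unfolding MiBG Gx ..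
    finally show ?thesis .
  qed
  have "lbw_P l \<beta> Z \<mu> Dm G *\<^sub>v ones_vec m = G *\<^sub>v ones_vec m - (G * B\<^sup>T * Mi * B * G) *\<^sub>v ones_vec m"
    unfolding Pdef by (rule minus_mult_distrib_mat_vec[OF G Qc one])
  also have "\<dots> = 0\<^sub>v m" unfolding Q1 by (rule minus_cancel_vec[OF Gone])
  finally show "lbw_P l \<beta> Z \<mu> Dm G *\<^sub>v ones_vec m = 0\<^sub>v m" .
  show "G * (basis_mat l \<beta> Dm)\<^sup>T *\<^sub>v x = G *\<^sub>v ones_vec m" using Gx unfolding B_def .
qed


lemma pone_dot:
  fixes p :: "real vec"
  assumes p: "p \<in> carrier_vec d"
  shows "(p @\<^sub>v ones_vec 1) \<bullet> unit_vec (d+1) d = 1"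
proof -
  have "(p @\<^sub>v ones_vec 1) \<bullet> unit_vec (d+1) d = (p @\<^sub>v ones_vec 1) $ d"
    by (rule scalar_prod_right_unit) simp
  also have "\<dots> = 1" using p by (simp add: ones_vec_def)
  finally show ?thesis .
qed

lemma affine_ft:
  assumes "affine_warp d l \<beta> Z \<mu>"
  shows "contains_free_translations d l \<beta> Z \<mu>"
proof -
  have l: "l = d + 1" and mu: "\<mu> = 0" and b: "\<forall>p\<in>carrier_vec d. \<beta> p = p @\<^sub>v ones_vec 1"
    using assms unfolding affine_warp_def by auto
  show ?thesis unfolding contains_free_translations_def
  proof (intro bexI conjI ballI impI)
    show "unit_vec (d+1) d \<in> carrier_vec l" unfolding l by (rule unit_vec_carrier)
    fix p :: "real vec" assume p: "p \<in> carrier_vec d"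
    show "\<beta> p \<bullet> unit_vec (d+1) d = 1" using b p pone_dot[OF p] by simp
  next
    assume "\<mu> > 0" thus "Z *\<^sub>v unit_vec (d + 1) d = 0\<^sub>v (dim_row Z)" using mu by simp
  qed
qed

lemma tps_ft:
  assumes tw: "tps_warp d l \<beta> Z \<mu>"
  shows "contains_free_translations d l \<beta> Z \<mu>"
proof -
  obtain c lam where invK: "invertible_mat (tps_K d l c lam)"
    and invG: "invertible_mat (tps_Ctil d l c * minv (tps_K d l c lam) * (tps_Ctil d l c)\<^sup>T)"
    and sq: "is_psd_sqrt Z (tps_Ebar d l c lam)"
    and bet: "\<forall>p\<in>carrier_vec d. \<beta> p = tps_beta d l c lam p"
    using tw unfolding tps_warp_def by blast
  define K where "K = tps_K d l c lam"
  define C where "C = tps_Ctil d l c"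
  define Ki where "Ki = minv K"
  define CT where "CT = C\<^sup>T"
  define Gm where "Gm = C * Ki * CT"
  define Gi where "Gi = minv Gm"
  define Ebar where "Ebar = tps_Ebar d l c lam"
  define E2 where "E2 = Gi * C * Ki"
  have Kc: "K \<in> carrier_mat l l" unfolding K_def tps_K_def by (rule mat_carrier)
  have Kip: "Ki \<in> carrier_mat l l \<and> K * Ki = 1\<^sub>m l \<and> Ki * K = 1\<^sub>m l"
    unfolding Ki_def by (rule minv_props[OF Kc invK[folded K_def]])
  have Kic: "Ki \<in> carrier_mat l l" using Kip by blast
  have Cc: "C \<in> carrier_mat (d+1) l" unfolding C_def tps_Ctil_def by (rule mat_carrier)
  have CTc: "CT \<in> carrier_mat l (d+1)" unfolding CT_def using Cc by simp
  have CKc: "C * Ki \<in> carrier_mat (d+1) l" using mult_carrier_mat[OF Cc Kic] .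
  have Gmc: "Gm \<in> carrier_mat (d+1) (d+1)" unfolding Gm_def using mult_carrier_mat[OF CKc CTc] .
  have invGm: "invertible_mat Gm" using invG unfolding Gm_def CT_def Ki_def K_def C_def .
  have Gip: "Gi \<in> carrier_mat (d+1) (d+1) \<and> Gm * Gi = 1\<^sub>m (d+1) \<and> Gi * Gm = 1\<^sub>m (d+1)"
    unfolding Gi_def by (rule minv_props[OF Gmc invGm])
  have Gic: "Gi \<in> carrier_mat (d+1) (d+1)" and GiGm: "Gi * Gm = 1\<^sub>m (d+1)" using Gip by blast+
  define e :: "real vec" where "e = unit_vec (d+1) d"
  have ec: "e \<in> carrier_vec (d+1)" unfolding e_def by (rule unit_vec_carrier)
  define x where "x = CT *\<^sub>v e"
  have xc: "x \<in> carrier_vec l" unfolding x_def using mult_mat_vec_carrier[OF CTc ec] .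
  have Kxc: "Ki *\<^sub>v x \<in> carrier_vec l" using mult_mat_vec_carrier[OF Kic xc] .
  have w: "C *\<^sub>v (Ki *\<^sub>v x) = Gm *\<^sub>v e"
  proof -
    have "C *\<^sub>v (Ki *\<^sub>v x) = (C * Ki) *\<^sub>v x" by (rule assoc_mult_mat_vec[OF Cc Kic xc, symmetric])
    also have "\<dots> = (C * Ki * CT) *\<^sub>v e" unfolding x_def by (rule assoc_mult_mat_vec[OF CKc CTc ec, symmetric])
    finally show ?thesis unfolding Gm_def .
  qed
  have Gme: "Gm *\<^sub>v e \<in> carrier_vec (d+1)" using mult_mat_vec_carrier[OF Gmc ec] .
  have GiGe: "Gi *\<^sub>v (Gm *\<^sub>v e) = e"
  proof -
    have "Gi *\<^sub>v (Gm *\<^sub>v e) = (Gi * Gm) *\<^sub>v e" by (rule assoc_mult_mat_vec[OF Gic Gmc ec, symmetric])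
    also have "\<dots> = e" unfolding GiGm by (rule one_mult_mat_vec[OF ec])
    finally show ?thesis .
  qed
  have GiCc: "Gi * C \<in> carrier_mat (d+1) l" using mult_carrier_mat[OF Gic Cc] .
  have E2c: "E2 \<in> carrier_mat (d+1) l" unfolding E2_def using mult_carrier_mat[OF GiCc Kic] .
  have E2x: "E2 *\<^sub>v x = e"
  proof -
    have "E2 *\<^sub>v x = (Gi * C) *\<^sub>v (Ki *\<^sub>v x)" unfolding E2_def by (rule assoc_mult_mat_vec[OF GiCc Kic xc])
    also have "\<dots> = Gi *\<^sub>v (C *\<^sub>v (Ki *\<^sub>v x))" by (rule assoc_mult_mat_vec[OF Gic Cc Kxc])
    finally show ?thesis unfolding w GiGe .
  qed
  have c1: "Ki * CT \<in> carrier_mat l (d+1)" using mult_carrier_mat[OF Kic CTc] .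
  have c2: "Ki * CT * Gi \<in> carrier_mat l (d+1)" using mult_carrier_mat[OF c1 Gic] .
  have c3: "Ki * CT * Gi * C \<in> carrier_mat l l" using mult_carrier_mat[OF c2 Cc] .
  have Qc: "Ki * CT * Gi * C * Ki \<in> carrier_mat l l" using mult_carrier_mat[OF c3 Kic] .
  have Ebar_eq: "Ebar = Ki - Ki * CT * Gi * C * Ki"
    unfolding Ebar_def tps_Ebar_def Let_def Gi_def Gm_def CT_def Ki_def K_def C_def ..
  have Ebc: "Ebar \<in> carrier_mat l l" unfolding Ebar_eq by (rule minus_carrier_mat[OF Qc])
  have Cxc: "C *\<^sub>v (Ki *\<^sub>v x) \<in> carrier_vec (d+1)" using mult_mat_vec_carrier[OF Cc Kxc] .
  have Qx: "(Ki * CT * Gi * C * Ki) *\<^sub>v x = Ki *\<^sub>v x"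
  proof -
    have "(Ki * CT * Gi * C * Ki) *\<^sub>v x = (Ki * CT * Gi * C) *\<^sub>v (Ki *\<^sub>v x)"
      by (rule assoc_mult_mat_vec[OF c3 Kic xc])
    also have "\<dots> = (Ki * CT * Gi) *\<^sub>v (C *\<^sub>v (Ki *\<^sub>v x))"
      by (rule assoc_mult_mat_vec[OF c2 Cc Kxc])
    also have "\<dots> = (Ki * CT) *\<^sub>v (Gi *\<^sub>v (Gm *\<^sub>v e))" unfolding w
      by (rule assoc_mult_mat_vec[OF c1 Gic Gme])
    also have "\<dots> = Ki *\<^sub>v (CT *\<^sub>v e)" unfolding GiGe
      by (rule assoc_mult_mat_vec[OF Kic CTc ec])
    finally show ?thesis unfolding x_def .
  qed
  have Ebx: "Ebar *\<^sub>v x = 0\<^sub>v l"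
  proof -
    have "Ebar *\<^sub>v x = Ki *\<^sub>v x - (Ki * CT * Gi * C * Ki) *\<^sub>v x"
      unfolding Ebar_eq by (rule minus_mult_distrib_mat_vec[OF Kic Qc xc])
    also have "\<dots> = 0\<^sub>v l" unfolding Qx by (rule minus_cancel_vec[OF Kxc])
    finally show ?thesis .
  qed
  have E_eq: "tps_E d l c lam = Ebar @\<^sub>r E2"
    unfolding tps_E_def Let_def Ebar_def E2_def Gi_def Gm_def CT_def Ki_def K_def C_def ..
  have Ec: "Ebar @\<^sub>r E2 \<in> carrier_mat (l + (d+1)) l" using carrier_append_rows[OF Ebc E2c] .
  have Ex: "(Ebar @\<^sub>r E2) *\<^sub>v x = 0\<^sub>v l @\<^sub>v e"
    unfolding mat_mult_append[OF Ebc E2c xc] Ebx E2x ..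
  have bx: "\<beta> p \<bullet> x = 1" if p: "p \<in> carrier_vec d" for p
  proof -
    define v where "v = vec l (\<lambda>j. tps_phi d (vnorm (p - c j)))"
    have vc: "v \<in> carrier_vec l" unfolding v_def by simp
    have o1: "ones_vec 1 \<in> carrier_vec 1" by (simp add: ones_vec_def)
    have pc: "p @\<^sub>v ones_vec 1 \<in> carrier_vec (d+1)" using append_carrier_vec[OF p o1] .
    have wc: "v @\<^sub>v (p @\<^sub>v ones_vec 1) \<in> carrier_vec (l + (d+1))" using append_carrier_vec[OF vc pc] .
    have "\<beta> p = (Ebar @\<^sub>r E2)\<^sup>T *\<^sub>v (v @\<^sub>v (p @\<^sub>v ones_vec 1))"
      using bet p unfolding tps_beta_def E_eq v_def by simp
    hence "\<beta> p \<bullet> x = (v @\<^sub>v (p @\<^sub>v ones_vec 1)) \<bullet> ((Ebar @\<^sub>r E2) *\<^sub>v x)"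
      using transpose_vec_mult_scalar[OF Ec xc wc] by simp
    also have "\<dots> = v \<bullet> 0\<^sub>v l + (p @\<^sub>v ones_vec 1) \<bullet> e"
      unfolding Ex by (rule scalar_prod_append[OF vc pc zero_carrier_vec ec])
    also have "\<dots> = 1" unfolding e_def using pone_dot[OF p] scalar_prod_right_zero[OF vc] by simp
    finally show ?thesis .
  qed
  have Zx: "Z *\<^sub>v x = 0\<^sub>v (dim_row Z)"
  proof -
    have psdZ: "psd Z" and dZ: "dim_row Z = dim_row Ebar" and ZZ: "Z * Z = Ebar"
      using sq unfolding is_psd_sqrt_def Ebar_def by blast+
    have dZl: "dim_row Z = l" using dZ Ebc by simp
    have Zc: "Z \<in> carrier_mat l l" and ZT: "Z\<^sup>T = Z"
      using psdZ unfolding psd_def dZl by blast+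
    define y where "y = Z *\<^sub>v x"
    have yc: "y \<in> carrier_vec l" unfolding y_def using mult_mat_vec_carrier[OF Zc xc] .
    have "y \<bullet> y = (Z\<^sup>T *\<^sub>v y) \<bullet> x" using transpose_vec_mult_scalar[OF Zc xc yc] unfolding y_def by simp
    also have "Z\<^sup>T *\<^sub>v y = (Z * Z) *\<^sub>v x" unfolding ZT y_def by (rule assoc_mult_mat_vec[OF Zc Zc xc, symmetric])
    also have "\<dots> = 0\<^sub>v l" unfolding ZZ by (rule Ebx)
    also have "0\<^sub>v l \<bullet> x = 0" by (rule scalar_prod_left_zero[OF xc])
    finally have "y = 0\<^sub>v (dim_vec y)" by (rule self_dot_zero)
    thus ?thesis using yc dZl unfolding y_def by simp
  qed
  show ?thesis unfolding contains_free_translations_def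
    using xc bx Zx by blast
qed

lemma msum_lemma:
  assumes "\<forall>i<k. P i \<in> carrier_mat m m \<and> P i *\<^sub>v ones_vec m = 0\<^sub>v m"
  shows "msum m m P k \<in> carrier_mat m m \<and> msum m m P k *\<^sub>v ones_vec m = 0\<^sub>v m"
  using assms
proof (induction k)
  case 0
  show ?case by (auto simp: ones_vec_def)
next
  case (Suc k)
  have IH: "msum m m P k \<in> carrier_mat m m" "msum m m P k *\<^sub>v ones_vec m = 0\<^sub>v m"
    using Suc by auto
  have Pk: "P k \<in> carrier_mat m m" "P k *\<^sub>v ones_vec m = 0\<^sub>v m" using Suc.prems by auto
  have one: "ones_vec m \<in> carrier_vec m" by (simp add: ones_vec_def)
  have "msum m m P (Suc k) *\<^sub>v ones_vec m = msum m m P k *\<^sub>v ones_vec m + P k *\<^sub>v ones_vec m"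
    unfolding msum.simps by (rule add_mult_distrib_mat_vec[OF IH(1) Pk(1) one])
  also have "\<dots> = 0\<^sub>v m" unfolding IH(2) Pk(2) by simp
  finally show ?case using IH(1) Pk(1) by simp
qed

theorem proposition6:
  fixes n d m :: nat
    and D \<Gamma> Z :: "nat \<Rightarrow> real mat"
    and \<beta> :: "nat \<Rightarrow> real vec \<Rightarrow> real vec"
    and l :: "nat \<Rightarrow> nat"
    and \<mu> :: "nat \<Rightarrow> real"
  assumes D: "\<forall>i<n. D i \<in> carrier_mat d m"
    and Gam: "\<forall>i<n. \<Gamma> i \<in> carrier_mat m m \<and> diagonal_mat (\<Gamma> i) \<and>
                    (\<forall>k<m. \<Gamma> i $$ (k,k) \<in> {0,1})"
    and warp: "\<forall>i<n. lbw d (l i) (\<beta> i) (Z i) (\<mu> i) \<and> \<mu> i \<ge> 0"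
    and Minv: "\<forall>i<n. invertible_mat (lbw_M (l i) (\<beta> i) (Z i) (\<mu> i) (D i) (\<Gamma> i))"
    and ft: "(\<forall>i<n. contains_free_translations d (l i) (\<beta> i) (Z i) (\<mu> i))
             \<or> (\<forall>i<n. affine_warp d (l i) (\<beta> i) (Z i) (\<mu> i) \<or> tps_warp d (l i) (\<beta> i) (Z i) (\<mu> i))"
  defines "P \<equiv> \<lambda>i. lbw_P (l i) (\<beta> i) (Z i) (\<mu> i) (D i) (\<Gamma> i)"
  shows "msum m m P n *\<^sub>v ones_vec m = 0\<^sub>v m
    \<and> (\<forall>i<n. P i *\<^sub>v ones_vec m = 0\<^sub>v m)
    \<and> (\<forall>i<n. \<exists>x\<in>carrier_vec (l i). \<Gamma> i * (basis_mat (l i) (\<beta> i) (D i))\<^sup>T *\<^sub>v x = \<Gamma> i *\<^sub>v ones_vec m \<and>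
                 (\<mu> i > 0 \<longrightarrow> Z i *\<^sub>v x = 0\<^sub>v (dim_row (Z i))))"
proof -
  have ftall: "contains_free_translations d (l i) (\<beta> i) (Z i) (\<mu> i)" if i: "i < n" for i
    using ft
  proof
    assume "\<forall>i<n. contains_free_translations d (l i) (\<beta> i) (Z i) (\<mu> i)"
    thus ?thesis using i by blast
  next
    assume "\<forall>i<n. affine_warp d (l i) (\<beta> i) (Z i) (\<mu> i) \<or> tps_warp d (l i) (\<beta> i) (Z i) (\<mu> i)"
    hence "affine_warp d (l i) (\<beta> i) (Z i) (\<mu> i) \<or> tps_warp d (l i) (\<beta> i) (Z i) (\<mu> i)" using i by blast
    thus ?thesis using affine_ft tps_ft by blast
  qed
  have each: "P i \<in> carrier_mat m m \<and> P i *\<^sub>v ones_vec m = 0\<^sub>v m \<and>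
     (\<exists>x\<in>carrier_vec (l i). \<Gamma> i * (basis_mat (l i) (\<beta> i) (D i))\<^sup>T *\<^sub>v x = \<Gamma> i *\<^sub>v ones_vec m \<and>
                 (\<mu> i > 0 \<longrightarrow> Z i *\<^sub>v x = 0\<^sub>v (dim_row (Z i))))" if i: "i < n" for i
  proof -
    obtain x where xc: "x \<in> carrier_vec (l i)" and bx: "\<forall>p\<in>carrier_vec d. \<beta> i p \<bullet> x = 1"
      and zx: "\<mu> i > 0 \<longrightarrow> Z i *\<^sub>v x = 0\<^sub>v (dim_row (Z i))"
      using ftall[OF i] unfolding contains_free_translations_def by blast
    have Di: "D i \<in> carrier_mat d m" using D i by blast
    have Gc: "\<Gamma> i \<in> carrier_mat m m" and Gd: "diagonal_mat (\<Gamma> i)" and G01: "\<forall>k<m. \<Gamma> i $$ (k,k) \<in> {0,1}"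
      using Gam i by blast+
    have GG: "\<Gamma> i * \<Gamma> i = \<Gamma> i" by (rule gam_idem[OF Gc Gd G01])
    have lb: "lbw d (l i) (\<beta> i) (Z i) (\<mu> i)" and mu: "\<mu> i \<ge> 0" using warp i by blast+
    have inv: "invertible_mat (lbw_M (l i) (\<beta> i) (Z i) (\<mu> i) (D i) (\<Gamma> i))" using Minv i by blast
    note cr = core[OF Di Gc GG lb mu inv xc bx zx]
    show ?thesis unfolding P_def using cr xc zx by blast
  qed
  have "msum m m P n \<in> carrier_mat m m \<and> msum m m P n *\<^sub>v ones_vec m = 0\<^sub>v m"
    by (rule msum_lemma) (use each in blast)
  thus ?thesis using each by blast
qed

end
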